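(* Let $q \ge 2$ and $n$ be integers, let $k$ be an integer with $k \le \lfloor n/2\rfloor - 1$, and let $p_{k+1}, p_{k+2}, \dots, p_n$ be real numbers such that $p_i \ge 0$ for all $i \in [k+1, n-(k+1)]$. If $$\sum_{i=j}^{n} p_i \binom{n-j}{i-j} \le 0 \quad \text{for all } j \in [k+1, n],$$ and $$\sum_{i=\lfloor n/2\rfloor+1}^{n} p_i \left(q^{2i-n}-1\right)\binom{n}{i} > 0,$$ then $k$-uniform states in $(\mathbb{C}^q)^{\otimes n}$ do not exist.
   Context: For integers $a \le b$, $[a,b]$ denotes $\{a, a+1, \dots, b\}$. A pure state $|\psi\rangle \in (\mathbb{C}^q)^{\otimes n}$ is called $k$-uniform if, with $\rho = |\psi\rangle\langle\psi|$, for every subset $S \subseteq \{1,\dots,n\}$ with $|S| = k$ the reduced state of $\rho$ on the parties in $S$ equals $I/q^k$, where $I$ is the identity on $(\mathbb{C}^q)^{\otimes k}$. *)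

theory Defs
  imports Complex_Main "HOL-Library.FuncSet"
begin

text \<open>Computational basis of (C^q)^{\<otimes>n}: configurations x : {0..<n} \<rightarrow> {0..<q}.
  A vector psi in (C^q)^{\<otimes>n} is given by its coordinates psi x on these configurations.\<close>

definition configs :: "nat set \<Rightarrow> nat \<Rightarrow> (nat \<Rightarrow> nat) set" where
  "configs S q = PiE S (\<lambda>_. {0..<q})"

definition merge_cfg :: "nat set \<Rightarrow> (nat \<Rightarrow> nat) \<Rightarrow> (nat \<Rightarrow> nat) \<Rightarrow> (nat \<Rightarrow> nat)" where
  "merge_cfg S a c = (\<lambda>i. if i \<in> S then a i else c i)"

text \<open>Matrix entry (a,b) of the reduced state Tr_{S^c} |psi><psi| on the parties S,
  in the computational basis.\<close>
definition reduced_state ::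
  "nat \<Rightarrow> nat \<Rightarrow> ((nat \<Rightarrow> nat) \<Rightarrow> complex) \<Rightarrow> nat set \<Rightarrow> (nat \<Rightarrow> nat) \<Rightarrow> (nat \<Rightarrow> nat) \<Rightarrow> complex" where
  "reduced_state n q psi S a b =
     (\<Sum>c\<in>configs ({0..<n} - S) q. psi (merge_cfg S a c) * cnj (psi (merge_cfg S b c)))"

definition k_uniform :: "nat \<Rightarrow> nat \<Rightarrow> nat \<Rightarrow> ((nat \<Rightarrow> nat) \<Rightarrow> complex) \<Rightarrow> bool" where
  "k_uniform n q k psi \<longleftrightarrow>
     (\<forall>S. S \<subseteq> {0..<n} \<and> card S = k \<longrightarrow>
        (\<forall>a\<in>configs S q. \<forall>b\<in>configs S q.
           reduced_state n q psi S a b = (if a = b then 1 / of_nat (q ^ k) else 0)))"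

end

theory Submission
  imports Defs
begin


lemma sum_PiE_split:
  assumes "t \<in> R"
  shows "sum f (PiE R B) = (\<Sum>e\<in>B t. \<Sum>g\<in>PiE (R - {t}) B. f (g(t:=e)))"
proof -
  have "PiE R B = (\<lambda>(y,g). g(t:=y)) ` (B t \<times> PiE (R-{t}) B)"
    using PiE_insert_eq[of t "R-{t}" B] assms by (simp add: insert_absorb)
  moreover have "inj_on (\<lambda>(y,g). g(t:=y)) (B t \<times> PiE (R-{t}) B)"
    by (rule inj_combinator) simp
  ultimately have "sum f (PiE R B) = sum (f \<circ> (\<lambda>(y,g). g(t:=y))) (B t \<times> PiE (R-{t}) B)"
    by (simp add: sum.reindex)
  then show ?thesis by (simp add: sum.cartesian_product split_def)
qed

lemma sum_merge:
  assumes "S \<subseteq> I"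
  shows "(\<Sum>a\<in>PiE S B. \<Sum>c\<in>PiE (I - S) B. f (merge_cfg S a c)) = sum f (PiE I B)"
proof -
  let ?m = "\<lambda>(a,c). merge_cfg S a c"
  have inj: "inj_on ?m (PiE S B \<times> PiE (I - S) B)"
  proof (rule inj_onI, clarsimp)
    fix a c a' c'
    assume h: "a \<in> PiE S B" "c \<in> PiE (I - S) B" "a' \<in> PiE S B" "c' \<in> PiE (I - S) B"
      "merge_cfg S a c = merge_cfg S a' c'"
    show "a = a' \<and> c = c'"
    proof
      show "a = a'"
      proof
        fix i show "a i = a' i"
          proof -
          have e: "merge_cfg S a c i = merge_cfg S a' c' i" by (simp add: h(5))
          then show ?thesis using h(1-4) by (cases "i \<in> S") (auto simp: merge_cfg_def PiE_def extensional_def)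
        qed
      qed
      show "c = c'"
      proof
        fix i show "c i = c' i"
          proof -
          have e: "merge_cfg S a c i = merge_cfg S a' c' i" by (simp add: h(5))
          then show ?thesis using h(1-4) by (cases "i \<in> S") (auto simp: merge_cfg_def PiE_def extensional_def)
        qed
      qed
    qed
  qed
  have img: "?m ` (PiE S B \<times> PiE (I - S) B) = PiE I B"
  proof
    show "?m ` (PiE S B \<times> PiE (I - S) B) \<subseteq> PiE I B"
      using assms by (auto simp: merge_cfg_def PiE_def extensional_def Pi_def)
    show "PiE I B \<subseteq> ?m ` (PiE S B \<times> PiE (I - S) B)"
    proof
      fix x assume x: "x \<in> PiE I B"
      have "x = ?m (restrict x S, restrict x (I - S))"
        using x assms by (auto simp: merge_cfg_def PiE_def extensional_def fun_eq_iff)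
      moreover have "(restrict x S, restrict x (I - S)) \<in> PiE S B \<times> PiE (I - S) B"
        using x assms by auto
      ultimately show "x \<in> ?m ` (PiE S B \<times> PiE (I - S) B)" by blast
    qed
  qed
  have "sum f (PiE I B) = sum (f \<circ> ?m) (PiE S B \<times> PiE (I - S) B)"
    using sum.reindex[OF inj, of f] img by simp
  then show ?thesis by (simp add: sum.cartesian_product split_def)
qed


type_synonym cfg = "nat \<Rightarrow> nat"

definition ptr :: "nat \<Rightarrow> nat \<Rightarrow> nat set \<Rightarrow> (cfg \<Rightarrow> cfg \<Rightarrow> complex) \<Rightarrow> cfg \<Rightarrow> cfg \<Rightarrow> complex" where
  "ptr n q S r a b = (\<Sum>c\<in>configs ({0..<n} - S) q. r (merge_cfg S a c) (merge_cfg S b c))"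

definition hs :: "nat \<Rightarrow> nat set \<Rightarrow> (cfg \<Rightarrow> cfg \<Rightarrow> complex) \<Rightarrow> real" where
  "hs q S M = (\<Sum>a\<in>configs S q. \<Sum>b\<in>configs S q. (cmod (M a b))^2)"

definition pur :: "nat \<Rightarrow> nat \<Rightarrow> (cfg \<Rightarrow> cfg \<Rightarrow> complex) \<Rightarrow> nat set \<Rightarrow> real" where
  "pur n q r S = hs q S (ptr n q S r)"

definition QQ :: "nat \<Rightarrow> nat \<Rightarrow> nat set \<Rightarrow> (cfg \<Rightarrow> cfg \<Rightarrow> complex) \<Rightarrow> real" where
  "QQ n q T r = (\<Sum>S\<in>Pow T. (-1)^card (T - S) * real q ^ card S * pur n q r S)"

lemma cmod_diff_sq: "(cmod (x - y))^2 = (cmod x)^2 + (cmod y)^2 - 2 * Re (x * cnj y)"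
  unfolding cmod_power2 by (simp add: power2_eq_square algebra_simps)

lemma cmod_sq_Re: "(cmod w)^2 = Re (w * cnj w)"
  unfolding cmod_power2 by (simp add: power2_eq_square)

lemma cmod_sum_sq: "(cmod (sum z A))^2 = (\<Sum>a\<in>A. \<Sum>b\<in>A. Re (z a * cnj (z b)))"
proof -
  have "(cmod (sum z A))^2 = Re (sum z A * cnj (sum z A))"
    by (rule cmod_sq_Re)
  also have "sum z A * cnj (sum z A) = (\<Sum>a\<in>A. \<Sum>b\<in>A. z a * cnj (z b))"
    by (simp add: sum_distrib_left sum_distrib_right cnj_sum) (rule sum.swap)
  also have "Re \<dots> = (\<Sum>a\<in>A. \<Sum>b\<in>A. Re (z a * cnj (z b)))"
    by (simp only: Re_sum)
  finally show ?thesis .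
qed

lemma complex_var_identity:
  "(\<Sum>a\<in>A. \<Sum>b\<in>A. (cmod (z a - z b))^2) = 2 * real (card A) * (\<Sum>a\<in>A. (cmod (z a))^2) - 2 * (cmod (sum z A))^2"
proof -
  have "(\<Sum>a\<in>A. \<Sum>b\<in>A. (cmod (z a - z b))^2)
     = (\<Sum>a\<in>A. \<Sum>b\<in>A. (cmod (z a))^2) + (\<Sum>a\<in>A. \<Sum>b\<in>A. (cmod (z b))^2) - 2 * (\<Sum>a\<in>A. \<Sum>b\<in>A. Re (z a * cnj (z b)))"
    by (simp add: cmod_diff_sq sum.distrib sum_subtractf sum_distrib_left)
  also have "\<dots> = 2 * real (card A) * (\<Sum>a\<in>A. (cmod (z a))^2) - 2 * (cmod (sum z A))^2"
    by (simp add: cmod_sum_sq sum_distrib_left[symmetric] sum.swap[of "\<lambda>a b. (cmod (z b))^2"])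
  finally show ?thesis .
qed


lemma ptr_diff: "ptr n q S (\<lambda>x y. r x y - s x y) = (\<lambda>a b. ptr n q S r a b - ptr n q S s a b)"
  by (auto simp: ptr_def fun_eq_iff sum_subtractf)

lemma ptr_sum: "ptr n q S (\<lambda>x y. \<Sum>i\<in>A. r i x y) = (\<lambda>a b. \<Sum>i\<in>A. ptr n q S (r i) a b)"
  unfolding ptr_def fun_eq_iff by (auto intro: sum.swap)

lemma sum_swap4: "(\<Sum>a\<in>A. \<Sum>b\<in>B. \<Sum>c\<in>C. \<Sum>d\<in>D. f a b c d) = (\<Sum>c\<in>C. \<Sum>d\<in>D. \<Sum>a\<in>A. \<Sum>b\<in>B. f a b c d)"
proof -
  have "(\<Sum>a\<in>A. \<Sum>b\<in>B. \<Sum>c\<in>C. \<Sum>d\<in>D. f a b c d) = (\<Sum>a\<in>A. \<Sum>c\<in>C. \<Sum>b\<in>B. \<Sum>d\<in>D. f a b c d)"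
    by (rule sum.cong[OF refl], rule sum.swap)
  also have "\<dots> = (\<Sum>a\<in>A. \<Sum>c\<in>C. \<Sum>d\<in>D. \<Sum>b\<in>B. f a b c d)"
    by (rule sum.cong[OF refl], rule sum.cong[OF refl], rule sum.swap)
  also have "\<dots> = (\<Sum>c\<in>C. \<Sum>a\<in>A. \<Sum>d\<in>D. \<Sum>b\<in>B. f a b c d)"
    by (rule sum.swap)
  also have "\<dots> = (\<Sum>c\<in>C. \<Sum>d\<in>D. \<Sum>a\<in>A. \<Sum>b\<in>B. f a b c d)"
    by (rule sum.cong[OF refl], rule sum.swap)
  finally show ?thesis .
qed

lemma sum_swap3: "(\<Sum>a\<in>A. \<Sum>b\<in>B. \<Sum>c\<in>C. f a b c) = (\<Sum>c\<in>C. \<Sum>a\<in>A. \<Sum>b\<in>B. f a b c)"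
proof -
  have "(\<Sum>a\<in>A. \<Sum>b\<in>B. \<Sum>c\<in>C. f a b c) = (\<Sum>a\<in>A. \<Sum>c\<in>C. \<Sum>b\<in>B. f a b c)"
    by (rule sum.cong[OF refl], rule sum.swap)
  also have "\<dots> = (\<Sum>c\<in>C. \<Sum>a\<in>A. \<Sum>b\<in>B. f a b c)"
    by (rule sum.swap)
  finally show ?thesis .
qed

lemma hs_var:
  "(\<Sum>a\<in>A. \<Sum>b\<in>A. hs q S (\<lambda>x y. M a x y - M b x y))
   = 2 * real (card A) * (\<Sum>a\<in>A. hs q S (M a)) - 2 * hs q S (\<lambda>x y. \<Sum>a\<in>A. M a x y)"
proof -
  have "(\<Sum>a\<in>A. \<Sum>b\<in>A. hs q S (\<lambda>x y. M a x y - M b x y))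
     = (\<Sum>x\<in>configs S q. \<Sum>y\<in>configs S q. \<Sum>a\<in>A. \<Sum>b\<in>A. (cmod (M a x y - M b x y))^2)"
    unfolding hs_def by (rule sum_swap4)
  also have "\<dots> = (\<Sum>x\<in>configs S q. \<Sum>y\<in>configs S q.
       2 * real (card A) * (\<Sum>a\<in>A. (cmod (M a x y))^2) - 2 * (cmod (\<Sum>a\<in>A. M a x y))^2)"
    by (simp only: complex_var_identity)
  also have "\<dots> = 2 * real (card A) * (\<Sum>x\<in>configs S q. \<Sum>y\<in>configs S q. \<Sum>a\<in>A. (cmod (M a x y))^2)
       - 2 * hs q S (\<lambda>x y. \<Sum>a\<in>A. M a x y)"
    by (simp add: hs_def sum_subtractf sum_distrib_left)
  also have "(\<Sum>x\<in>configs S q. \<Sum>y\<in>configs S q. \<Sum>a\<in>A. (cmod (M a x y))^2) = (\<Sum>a\<in>A. hs q S (M a))"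
    unfolding hs_def by (rule sum_swap3)
  finally show ?thesis .
qed

lemma aux_lin:
  fixes c g :: "'s \<Rightarrow> real" and h :: "'a \<Rightarrow> 's \<Rightarrow> real"
  shows "(\<Sum>s\<in>P. c s * (K * (\<Sum>a\<in>A. h a s) - 2 * g s)) = K * (\<Sum>a\<in>A. \<Sum>s\<in>P. c s * h a s) - 2 * (\<Sum>s\<in>P. c s * g s)"
proof -
  have "(\<Sum>s\<in>P. c s * (K * (\<Sum>a\<in>A. h a s) - 2 * g s)) = (\<Sum>s\<in>P. K * (\<Sum>a\<in>A. c s * h a s) - 2 * (c s * g s))"
    by (rule sum.cong[OF refl]) (simp add: sum_distrib_left algebra_simps)
  also have "\<dots> = K * (\<Sum>s\<in>P. \<Sum>a\<in>A. c s * h a s) - 2 * (\<Sum>s\<in>P. c s * g s)"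
    by (simp add: sum_subtractf sum_distrib_left)
  also have "(\<Sum>s\<in>P. \<Sum>a\<in>A. c s * h a s) = (\<Sum>a\<in>A. \<Sum>s\<in>P. c s * h a s)"
    by (rule sum.swap)
  finally show ?thesis .
qed

lemma QQ_var:
  "(\<Sum>a\<in>A. \<Sum>b\<in>A. QQ n q T (\<lambda>x y. r a x y - r b x y))
   = 2 * real (card A) * (\<Sum>a\<in>A. QQ n q T (r a)) - 2 * QQ n q T (\<lambda>x y. \<Sum>a\<in>A. r a x y)"
proof -
  have "(\<Sum>a\<in>A. \<Sum>b\<in>A. QQ n q T (\<lambda>x y. r a x y - r b x y))
     = (\<Sum>S\<in>Pow T. (-1)^card (T - S) * real q ^ card S *
          (\<Sum>a\<in>A. \<Sum>b\<in>A. hs q S (\<lambda>x y. ptr n q S (r a) x y - ptr n q S (r b) x y)))"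
    unfolding QQ_def pur_def ptr_diff
    by (simp only: sum_distrib_left) (rule sum_swap3)
  also have "\<dots> = (\<Sum>S\<in>Pow T. (-1)^card (T - S) * real q ^ card S *
          (2 * real (card A) * (\<Sum>a\<in>A. hs q S (ptr n q S (r a))) - 2 * hs q S (\<lambda>x y. \<Sum>a\<in>A. ptr n q S (r a) x y)))"
    by (simp only: hs_var)
  also have "\<dots> = 2 * real (card A) * (\<Sum>a\<in>A. \<Sum>S\<in>Pow T. (-1)^card (T - S) * real q ^ card S * hs q S (ptr n q S (r a)))
       - 2 * (\<Sum>S\<in>Pow T. (-1)^card (T - S) * real q ^ card S * hs q S (\<lambda>x y. \<Sum>a\<in>A. ptr n q S (r a) x y))"
    by (rule aux_lin)
  also have "\<dots> = 2 * real (card A) * (\<Sum>a\<in>A. QQ n q T (r a)) - 2 * QQ n q T (\<lambda>x y. \<Sum>a\<in>A. r a x y)"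
    unfolding QQ_def pur_def ptr_sum by (rule refl)
  finally show ?thesis .
qed


definition rr :: "nat \<Rightarrow> (cfg \<Rightarrow> cfg \<Rightarrow> complex) \<Rightarrow> nat \<Rightarrow> nat \<Rightarrow> cfg \<Rightarrow> cfg \<Rightarrow> complex" where
  "rr t r a b x y = (if x t = 0 \<and> y t = 0 then r (x(t:=a)) (y(t:=b)) else 0)"

lemma merge_upd: "t \<notin> S \<Longrightarrow> (merge_cfg S a (g(t:=e)))(t:=b) = merge_cfg S a (g(t:=b))"
  by (auto simp: merge_cfg_def fun_eq_iff)

lemma merge_upd2: "t \<notin> S \<Longrightarrow> (merge_cfg S a (g(t:=e)))(t:=b) = merge_cfg (insert t S) (a(t:=b)) g"
  by (auto simp: merge_cfg_def fun_eq_iff)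

lemma merge_at: "t \<notin> S \<Longrightarrow> merge_cfg S a (g(t:=e)) t = e"
  by (simp add: merge_cfg_def)

lemma sum_if0:
  assumes "(0::nat) < q"
  shows "(\<Sum>e\<in>{0..<q}. if e = 0 then (F e :: 'b::comm_monoid_add) else 0) = F 0"
  using assms by (simp add: sum.delta)

lemma ptr_step1:
  assumes tS: "t \<notin> S" and tn: "t < n" and q: "0 < q"
  shows "ptr n q S (\<lambda>x y. \<Sum>a\<in>{0..<q}. rr t r a a x y) = ptr n q S r"
proof (intro ext)
  fix \<alpha> \<beta>
  have tR: "t \<in> {0..<n} - S" using tS tn by auto
  have "ptr n q S (\<lambda>x y. \<Sum>a\<in>{0..<q}. rr t r a a x y) \<alpha> \<beta>
     = (\<Sum>e\<in>{0..<q}. \<Sum>g\<in>PiE ({0..<n} - S - {t}) (\<lambda>_. {0..<q}).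
          \<Sum>a\<in>{0..<q}. rr t r a a (merge_cfg S \<alpha> (g(t:=e))) (merge_cfg S \<beta> (g(t:=e))))"
    unfolding ptr_def configs_def by (rule sum_PiE_split[OF tR])
  also have "\<dots> = (\<Sum>e\<in>{0..<q}. if e = 0 then (\<Sum>g\<in>PiE ({0..<n} - S - {t}) (\<lambda>_. {0..<q}).
          \<Sum>a\<in>{0..<q}. r (merge_cfg S \<alpha> (g(t:=a))) (merge_cfg S \<beta> (g(t:=a)))) else 0)"
    by (rule sum.cong[OF refl]) (simp add: rr_def merge_at[OF tS] merge_upd[OF tS])
  also have "\<dots> = (\<Sum>g\<in>PiE ({0..<n} - S - {t}) (\<lambda>_. {0..<q}).
          \<Sum>a\<in>{0..<q}. r (merge_cfg S \<alpha> (g(t:=a))) (merge_cfg S \<beta> (g(t:=a))))"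
    by (rule sum_if0[OF q])
  also have "\<dots> = (\<Sum>a\<in>{0..<q}. \<Sum>g\<in>PiE ({0..<n} - S - {t}) (\<lambda>_. {0..<q}).
          r (merge_cfg S \<alpha> (g(t:=a))) (merge_cfg S \<beta> (g(t:=a))))"
    by (rule sum.swap)
  also have "\<dots> = ptr n q S r \<alpha> \<beta>"
    unfolding ptr_def configs_def by (rule sum_PiE_split[OF tR, symmetric])
  finally show "ptr n q S (\<lambda>x y. \<Sum>a\<in>{0..<q}. rr t r a a x y) \<alpha> \<beta> = ptr n q S r \<alpha> \<beta>" .
qed

lemma ptr_step2:
  assumes tS: "t \<notin> S" and tn: "t < n" and q: "0 < q"
  shows "ptr n q (insert t S) r (\<alpha>(t:=a)) (\<beta>(t:=b)) = ptr n q S (rr t r a b) \<alpha> \<beta>"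
proof -
  have tR: "t \<in> {0..<n} - S" using tS tn by auto
  have eq: "{0..<n} - S - {t} = {0..<n} - insert t S" by auto
  have "ptr n q S (rr t r a b) \<alpha> \<beta>
     = (\<Sum>e\<in>{0..<q}. \<Sum>g\<in>PiE ({0..<n} - S - {t}) (\<lambda>_. {0..<q}).
          rr t r a b (merge_cfg S \<alpha> (g(t:=e))) (merge_cfg S \<beta> (g(t:=e))))"
    unfolding ptr_def configs_def by (rule sum_PiE_split[OF tR])
  also have "\<dots> = (\<Sum>e\<in>{0..<q}. if e = 0 then (\<Sum>g\<in>PiE ({0..<n} - S - {t}) (\<lambda>_. {0..<q}).
          r (merge_cfg (insert t S) (\<alpha>(t:=a)) g) (merge_cfg (insert t S) (\<beta>(t:=b)) g)) else 0)"
    by (rule sum.cong[OF refl]) (simp add: rr_def merge_at[OF tS] merge_upd2[OF tS])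
  also have "\<dots> = (\<Sum>g\<in>PiE ({0..<n} - S - {t}) (\<lambda>_. {0..<q}).
          r (merge_cfg (insert t S) (\<alpha>(t:=a)) g) (merge_cfg (insert t S) (\<beta>(t:=b)) g))"
    by (rule sum_if0[OF q])
  also have "\<dots> = ptr n q (insert t S) r (\<alpha>(t:=a)) (\<beta>(t:=b))"
    unfolding ptr_def configs_def eq ..
  finally show ?thesis by simp
qed

lemma hs_insert:
  assumes tS: "t \<notin> S"
  shows "hs q (insert t S) M = (\<Sum>a\<in>{0..<q}. \<Sum>b\<in>{0..<q}. hs q S (\<lambda>x y. M (x(t:=a)) (y(t:=b))))"
proof -
  have eq: "insert t S - {t} = S" using tS by auto
  have "hs q (insert t S) M = (\<Sum>a\<in>{0..<q}. \<Sum>x\<in>configs S q. \<Sum>b\<in>{0..<q}. \<Sum>y\<in>configs S q. (cmod (M (x(t:=a)) (y(t:=b))))^2)"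
    unfolding hs_def configs_def
    by (subst sum_PiE_split[of t], simp, subst sum_PiE_split[of t], simp, simp only: eq)
  also have "\<dots> = (\<Sum>a\<in>{0..<q}. \<Sum>b\<in>{0..<q}. \<Sum>x\<in>configs S q. \<Sum>y\<in>configs S q. (cmod (M (x(t:=a)) (y(t:=b))))^2)"
    by (rule sum.cong[OF refl], rule sum.swap)
  finally show ?thesis unfolding hs_def .
qed


lemma inj_insert_Pow: "t \<notin> T \<Longrightarrow> inj_on (insert t) (Pow T)"
  by (rule inj_onI) (metis Diff_insert_absorb PowD subsetD)

lemma QQ_insert:
  assumes fin: "finite T" and tT: "t \<notin> T" and tn: "t < n" and TT: "T \<subseteq> {0..<n}" and q: "0 < q"
  shows "QQ n q (insert t T) r = real q * (\<Sum>a\<in>{0..<q}. \<Sum>b\<in>{0..<q}. QQ n q T (rr t r a b))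
            - QQ n q T (\<lambda>x y. \<Sum>a\<in>{0..<q}. rr t r a a x y)"
proof -
  let ?c = "\<lambda>S. (-1::real)^card (T - S) * real q ^ card S"
  have disj: "Pow T \<inter> insert t ` Pow T = {}" using tT by auto
  have "QQ n q (insert t T) r = (\<Sum>S\<in>Pow T. (-1)^card (insert t T - S) * real q ^ card S * pur n q r S)
       + (\<Sum>S\<in>insert t ` Pow T. (-1)^card (insert t T - S) * real q ^ card S * pur n q r S)"
    unfolding QQ_def Pow_insert using fin disj by (simp add: sum.union_disjoint)
  also have "(\<Sum>S\<in>Pow T. (-1)^card (insert t T - S) * real q ^ card S * pur n q r S)
      = - (\<Sum>S\<in>Pow T. ?c S * pur n q (\<lambda>x y. \<Sum>a\<in>{0..<q}. rr t r a a x y) S)"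
  proof -
    have "(\<Sum>S\<in>Pow T. (-1)^card (insert t T - S) * real q ^ card S * pur n q r S)
        = (\<Sum>S\<in>Pow T. - (?c S * pur n q (\<lambda>x y. \<Sum>a\<in>{0..<q}. rr t r a a x y) S))"
    proof (rule sum.cong[OF refl])
      fix S assume S: "S \<in> Pow T"
      have tS: "t \<notin> S" using S tT by auto
      have "insert t T - S = insert t (T - S)" using tS by auto
      then have c: "card (insert t T - S) = Suc (card (T - S))" using fin tT by simp
      have p: "pur n q (\<lambda>x y. \<Sum>a\<in>{0..<q}. rr t r a a x y) S = pur n q r S"
        unfolding pur_def ptr_step1[OF tS tn q] ..
      show "(-1)^card (insert t T - S) * real q ^ card S * pur n q r S
          = - (?c S * pur n q (\<lambda>x y. \<Sum>a\<in>{0..<q}. rr t r a a x y) S)"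
        by (simp add: c p)
    qed
    then show ?thesis by (simp add: sum_negf)
  qed
  also have "(\<Sum>S\<in>insert t ` Pow T. (-1)^card (insert t T - S) * real q ^ card S * pur n q r S)
      = (\<Sum>S\<in>Pow T. (-1)^card (insert t T - insert t S) * real q ^ card (insert t S) * pur n q r (insert t S))"
    by (simp add: sum.reindex[OF inj_insert_Pow[OF tT]])
  also have "\<dots> = (\<Sum>S\<in>Pow T. real q * (?c S * (\<Sum>a\<in>{0..<q}. \<Sum>b\<in>{0..<q}. pur n q (rr t r a b) S)))"
  proof (rule sum.cong[OF refl])
    fix S assume S: "S \<in> Pow T"
    have tS: "t \<notin> S" using S tT by auto
    have fS: "finite S" using S fin finite_subset by auto
    have "insert t T - insert t S = T - S" using tT by auto
    moreover have "card (insert t S) = Suc (card S)" using fS tS by simp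
    moreover have "pur n q r (insert t S) = (\<Sum>a\<in>{0..<q}. \<Sum>b\<in>{0..<q}. pur n q (rr t r a b) S)"
      unfolding pur_def hs_insert[OF tS] ptr_step2[OF tS tn q] by (rule refl)
    ultimately show "(-1)^card (insert t T - insert t S) * real q ^ card (insert t S) * pur n q r (insert t S)
        = real q * (?c S * (\<Sum>a\<in>{0..<q}. \<Sum>b\<in>{0..<q}. pur n q (rr t r a b) S))"
      by simp
  qed
  also have "\<dots> = real q * (\<Sum>a\<in>{0..<q}. \<Sum>b\<in>{0..<q}. QQ n q T (rr t r a b))"
  proof -
    have "(\<Sum>S\<in>Pow T. ?c S * (\<Sum>a\<in>{0..<q}. \<Sum>b\<in>{0..<q}. pur n q (rr t r a b) S))
        = (\<Sum>S\<in>Pow T. \<Sum>a\<in>{0..<q}. \<Sum>b\<in>{0..<q}. ?c S * pur n q (rr t r a b) S)"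
      by (simp only: sum_distrib_left)
    also have "\<dots> = (\<Sum>a\<in>{0..<q}. \<Sum>b\<in>{0..<q}. QQ n q T (rr t r a b))"
      unfolding QQ_def by (rule sum_swap3[symmetric])
    finally show ?thesis by (simp only: sum_distrib_left[symmetric])
  qed
  finally show ?thesis unfolding QQ_def by simp
qed

lemma QQ_nonneg:
  assumes "finite T" "T \<subseteq> {0..<n}" "0 < q"
  shows "0 \<le> QQ n q T r"
  using assms(1,2)
proof (induction T arbitrary: r rule: finite_induct)
  case empty
  show ?case by (simp add: QQ_def pur_def hs_def sum_nonneg)
next
  case (insert t T)
  have tn: "t < n" and TT: "T \<subseteq> {0..<n}" using insert.prems by auto
  have IH: "\<And>r. 0 \<le> QQ n q T r" using insert.IH TT by blast
  let ?s = "\<lambda>x y. \<Sum>a\<in>{0..<q}. rr t r a a x y"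
  have var: "(\<Sum>a\<in>{0..<q}. \<Sum>b\<in>{0..<q}. QQ n q T (\<lambda>x y. rr t r a a x y - rr t r b b x y))
     = 2 * real (card {0..<q}) * (\<Sum>a\<in>{0..<q}. QQ n q T (rr t r a a)) - 2 * QQ n q T ?s"
    by (rule QQ_var)
  have "0 \<le> (\<Sum>a\<in>{0..<q}. \<Sum>b\<in>{0..<q}. QQ n q T (\<lambda>x y. rr t r a a x y - rr t r b b x y))"
    by (intro sum_nonneg IH)
  with var have v: "QQ n q T ?s \<le> real q * (\<Sum>a\<in>{0..<q}. QQ n q T (rr t r a a))" by simp
  have d: "(\<Sum>a\<in>{0..<q}. QQ n q T (rr t r a a)) \<le> (\<Sum>a\<in>{0..<q}. \<Sum>b\<in>{0..<q}. QQ n q T (rr t r a b))"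
  proof (rule sum_mono)
    fix a assume "a \<in> {0..<q}"
    then show "QQ n q T (rr t r a a) \<le> (\<Sum>b\<in>{0..<q}. QQ n q T (rr t r a b))"
      using member_le_sum[of a "{0..<q}" "\<lambda>b. QQ n q T (rr t r a b)"] IH by auto
  qed
  have "real q * (\<Sum>a\<in>{0..<q}. QQ n q T (rr t r a a)) \<le> real q * (\<Sum>a\<in>{0..<q}. \<Sum>b\<in>{0..<q}. QQ n q T (rr t r a b))"
    using d by (simp add: mult_left_mono)
  then show ?case
    unfolding QQ_insert[OF insert.hyps(1,2) tn TT assms(3)] using v by linarith
qed



lemma alt_Pow:
  assumes "finite A"
  shows "(\<Sum>W\<in>Pow A. (-1::real)^card W) = (if A = {} then 1 else 0)"
  using assms
proof (induction A rule: finite_induct)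
  case empty then show ?case by simp
next
  case (insert a A)
  have inj: "inj_on (insert a) (Pow A)"
    by (rule inj_onI) (metis Diff_insert_absorb PowD subsetD insert.hyps(2))
  have disj: "Pow A \<inter> insert a ` Pow A = {}" using insert.hyps by auto
  have "(\<Sum>W\<in>Pow (insert a A). (-1::real)^card W)
      = (\<Sum>W\<in>Pow A. (-1::real)^card W) + (\<Sum>W\<in>insert a ` Pow A. (-1::real)^card W)"
    unfolding Pow_insert using insert.hyps disj by (simp add: sum.union_disjoint)
  also have "(\<Sum>W\<in>insert a ` Pow A. (-1::real)^card W) = (\<Sum>W\<in>Pow A. (-1::real)^card (insert a W))"
    by (simp add: sum.reindex[OF inj])
  also have "\<dots> = (\<Sum>W\<in>Pow A. - ((-1::real)^card W))"
  proof (rule sum.cong[OF refl])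
    fix W assume "W \<in> Pow A"
    then have "a \<notin> W" "finite W" using insert.hyps finite_subset by auto
    then show "(-1::real)^card (insert a W) = - ((-1::real)^card W)" by simp
  qed
  finally show ?case by (simp add: sum_negf)
qed

lemma alt_super:
  assumes "finite U" "S \<subseteq> U"
  shows "(\<Sum>T\<in>{T\<in>Pow U. S \<subseteq> T}. (-1::real)^card (T - S)) = (if S = U then 1 else 0)"
proof -
  have "(\<Sum>T\<in>{T\<in>Pow U. S \<subseteq> T}. (-1::real)^card (T - S)) = (\<Sum>W\<in>Pow (U - S). (-1::real)^card W)"
    by (rule sum.reindex_bij_witness[where i="\<lambda>W. S \<union> W" and j="\<lambda>T. T - S"])
       (use assms in \<open>auto simp: Un_Diff\<close>)
  also have "\<dots> = (if S = U then 1 else 0)"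
    using assms by (simp add: alt_Pow)
  finally show ?thesis .
qed

lemma mobius_sum:
  fixes f :: "'a set \<Rightarrow> real"
  assumes "finite U"
  shows "(\<Sum>T\<in>Pow U. \<Sum>S\<in>Pow T. (-1)^card (T - S) * f S) = f U"
proof -
  have "(\<Sum>T\<in>Pow U. \<Sum>S\<in>Pow T. (-1)^card (T - S) * f S)
      = (\<Sum>T\<in>Pow U. \<Sum>S\<in>{S. S \<in> Pow U \<and> S \<subseteq> T}. (-1)^card (T - S) * f S)"
    by (rule sum.cong[OF refl]) (rule sum.cong, auto)
  also have "\<dots> = (\<Sum>S\<in>Pow U. \<Sum>T\<in>{T. T \<in> Pow U \<and> S \<subseteq> T}. (-1)^card (T - S) * f S)"
    using assms by (intro sum.swap_restrict) auto
  also have "\<dots> = (\<Sum>S\<in>Pow U. f S * (\<Sum>T\<in>{T\<in>Pow U. S \<subseteq> T}. (-1::real)^card (T - S)))"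
    by (simp add: sum_distrib_left mult.commute)
  also have "\<dots> = (\<Sum>S\<in>Pow U. if S = U then f U else 0)"
  proof (rule sum.cong[OF refl])
    fix S assume "S \<in> Pow U"
    then have "S \<subseteq> U" by auto
    then show "f S * (\<Sum>T\<in>{T\<in>Pow U. S \<subseteq> T}. (-1::real)^card (T - S)) = (if S = U then f U else 0)"
      using alt_super[OF assms, of S] by simp
  qed
  also have "\<dots> = f U" using assms by simp
  finally show ?thesis .
qed

lemma sum_Pow_card:
  assumes "finite A"
  shows "(\<Sum>U\<in>Pow A. f (card U)) = (\<Sum>i=0..card A. real (card A choose i) * (f i :: real))"
proof -
  have "(\<Sum>U\<in>Pow A. f (card U)) = (\<Sum>i\<in>{0..card A}. \<Sum>U\<in>{U. U \<in> Pow A \<and> card U = i}. f (card U))"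
    using assms by (intro sum.group[symmetric]) (auto intro: card_mono)
  also have "\<dots> = (\<Sum>i=0..card A. real (card A choose i) * f i)"
  proof (rule sum.cong[OF refl])
    fix i
    have "{U. U \<in> Pow A \<and> card U = i} = {B. B \<subseteq> A \<and> card B = i}" by auto
    then show "(\<Sum>U\<in>{U. U \<in> Pow A \<and> card U = i}. f (card U)) = real (card A choose i) * f i"
      using n_subsets[OF assms, of i] by simp
  qed
  finally show ?thesis .
qed

lemma sum_supersets_card:
  assumes "finite A" "T \<subseteq> A"
  shows "(\<Sum>U\<in>{U\<in>Pow A. T \<subseteq> U}. p (card U)) = (\<Sum>i=card T..card A. p i * real ((card A - card T) choose (i - card T)))"
proof -
  have fT: "finite T" using assms finite_subset by auto
  have "(\<Sum>U\<in>{U\<in>Pow A. T \<subseteq> U}. p (card U)) = (\<Sum>W\<in>Pow (A - T). p (card T + card W))"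
  proof (rule sum.reindex_bij_witness[where i="\<lambda>W. T \<union> W" and j="\<lambda>U. U - T"])
    fix U assume U: "U \<in> {U\<in>Pow A. T \<subseteq> U}"
    then have "finite U" "T \<subseteq> U" using assms(1) finite_subset by auto
    then show "p (card T + card (U - T)) = p (card U)"
      by (simp add: card_Diff_subset card_mono fT)
  qed (use assms in \<open>auto simp: Un_Diff\<close>)
  also have "\<dots> = (\<Sum>m=0..card (A - T). real (card (A - T) choose m) * p (card T + m))"
    using assms by (intro sum_Pow_card) auto
  also have "card (A - T) = card A - card T" using assms fT by (simp add: card_Diff_subset)
  also have "(\<Sum>m=0..card A - card T. real ((card A - card T) choose m) * p (card T + m))
      = (\<Sum>i=card T..card A. p i * real ((card A - card T) choose (i - card T)))"
  proof -
    have le: "card T \<le> card A" using assms by (simp add: card_mono)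
    have "(\<Sum>i=card T..card A. p i * real ((card A - card T) choose (i - card T)))
       = (\<Sum>i=0 + card T..(card A - card T) + card T. p i * real ((card A - card T) choose (i - card T)))"
      using le by simp
    also have "\<dots> = (\<Sum>m=0..card A - card T. p (m + card T) * real ((card A - card T) choose m))"
      unfolding sum.shift_bounds_cl_nat_ivl by simp
    finally show ?thesis by (simp add: mult.commute add.commute)
  qed
  finally show ?thesis .
qed



definition st :: "(cfg \<Rightarrow> complex) \<Rightarrow> cfg \<Rightarrow> cfg \<Rightarrow> complex" where
  "st psi x y = psi x * cnj (psi y)"

lemma ptr_st: "ptr n q S (st psi) = reduced_state n q psi S"
  by (simp add: ptr_def st_def reduced_state_def fun_eq_iff)

lemma card_configs: "finite S \<Longrightarrow> card (configs S q) = q ^ card S"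
  by (simp add: configs_def card_PiE)

lemma finite_configs: "finite S \<Longrightarrow> finite (configs S q)"
  by (simp add: configs_def finite_PiE)

lemma trace_eq:
  assumes "S \<subseteq> {0..<n}"
  shows "(\<Sum>a\<in>configs S q. reduced_state n q psi S a a) = (\<Sum>x\<in>configs {0..<n} q. psi x * cnj (psi x))"
  unfolding reduced_state_def configs_def
  by (rule sum_merge[OF assms, where B="\<lambda>_. {0..<q}" and f="\<lambda>x. psi x * cnj (psi x)"])

lemma norm1:
  assumes ku: "k_uniform n q k psi" and kn: "k \<le> n" and q: "0 < q"
  shows "(\<Sum>x\<in>configs {0..<n} q. psi x * cnj (psi x)) = 1"
proof -
  have S0: "{0..<k} \<subseteq> {0..<n}" "card {0..<k} = k" using kn by auto
  have "(\<Sum>x\<in>configs {0..<n} q. psi x * cnj (psi x)) = (\<Sum>a\<in>configs {0..<k} q. reduced_state n q psi {0..<k} a a)"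
    using trace_eq[OF S0(1)] by simp
  also have "\<dots> = (\<Sum>a\<in>configs {0..<k} q. 1 / of_nat (q ^ k))"
    using ku S0 unfolding k_uniform_def by (intro sum.cong) auto
  also have "\<dots> = 1" using q by (simp add: card_configs)
  finally show ?thesis .
qed

lemma merge_inj:
  assumes "a \<in> configs S q" "b \<in> configs S q"
  shows "merge_cfg S a g = merge_cfg S b g \<longleftrightarrow> a = b"
proof
  assume h: "merge_cfg S a g = merge_cfg S b g"
  show "a = b"
  proof
    fix i
    have e: "merge_cfg S a g i = merge_cfg S b g i" by (simp add: h)
    show "a i = b i"
      using e assms by (cases "i \<in> S") (auto simp: merge_cfg_def configs_def PiE_def extensional_def)
  qed
qed simp

lemma red_small:
  assumes ku: "k_uniform n q k psi" and kn: "k \<le> n" and q: "0 < q"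
    and S: "S \<subseteq> {0..<n}" "card S \<le> k" and ab: "a \<in> configs S q" "b \<in> configs S q"
  shows "reduced_state n q psi S a b = (if a = b then 1 / of_nat (q ^ card S) else 0)"
proof -
  have fS: "finite S" using S finite_subset by auto
  have "k - card S \<le> card ({0..<n} - S)" using S kn fS by (simp add: card_Diff_subset)
  then obtain W where W: "W \<subseteq> {0..<n} - S" "card W = k - card S" "finite W"
    by (rule obtain_subset_with_card_n)
  define S' where "S' = S \<union> W"
  have S'n: "S' \<subseteq> {0..<n}" using S W by (auto simp: S'_def)
  have dSW: "S \<inter> W = {}" using W by auto
  have cS': "card S' = k" using W S fS dSW by (simp add: S'_def card_Un_disjoint)
  have WI: "W \<subseteq> {0..<n} - S" using W by simp
  have eqI: "{0..<n} - S - W = {0..<n} - S'" by (auto simp: S'_def)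
  have "reduced_state n q psi S a b
      = (\<Sum>g\<in>PiE W (\<lambda>_. {0..<q}). \<Sum>d\<in>PiE ({0..<n} - S - W) (\<lambda>_. {0..<q}).
           psi (merge_cfg S a (merge_cfg W g d)) * cnj (psi (merge_cfg S b (merge_cfg W g d))))"
    unfolding reduced_state_def configs_def
    by (rule sum_merge[OF WI, symmetric])
  also have "\<dots> = (\<Sum>g\<in>configs W q. reduced_state n q psi S' (merge_cfg S a g) (merge_cfg S b g))"
  proof (rule sum.cong)
    fix g
    have m: "merge_cfg S x (merge_cfg W g d) = merge_cfg S' (merge_cfg S x g) d" for x d
      by (auto simp: merge_cfg_def S'_def fun_eq_iff)
    show "(\<Sum>d\<in>PiE ({0..<n} - S - W) (\<lambda>_. {0..<q}).
           psi (merge_cfg S a (merge_cfg W g d)) * cnj (psi (merge_cfg S b (merge_cfg W g d))))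
        = reduced_state n q psi S' (merge_cfg S a g) (merge_cfg S b g)"
      unfolding reduced_state_def configs_def eqI m ..
  qed (simp add: configs_def)
  also have "\<dots> = (\<Sum>g\<in>configs W q. if a = b then 1 / of_nat (q ^ k) else 0)"
  proof (rule sum.cong[OF refl])
    fix g assume g: "g \<in> configs W q"
    have mem: "merge_cfg S x g \<in> configs S' q" if "x \<in> configs S q" for x
      using that g by (auto simp: configs_def merge_cfg_def S'_def PiE_def extensional_def Pi_def)
    have "reduced_state n q psi S' (merge_cfg S a g) (merge_cfg S b g)
        = (if merge_cfg S a g = merge_cfg S b g then 1 / of_nat (q ^ k) else 0)"
      using ku S'n cS' mem[OF ab(1)] mem[OF ab(2)] unfolding k_uniform_def by blast
    then show "reduced_state n q psi S' (merge_cfg S a g) (merge_cfg S b g) = (if a = b then 1 / of_nat (q ^ k) else 0)"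
      by (simp add: merge_inj[OF ab])
  qed
  also have "\<dots> = (if a = b then 1 / of_nat (q ^ card S) else 0)"
  proof (cases "a = b")
    case True
    have "k = card S + card W" using W S by simp
    then have "(of_nat (q ^ card W) :: complex) / of_nat (q ^ k) = 1 / of_nat (q ^ card S)"
      using q by (simp add: power_add field_simps)
    then show ?thesis using True W by (simp add: card_configs)
  qed simp
  finally show ?thesis .
qed

lemma pur_small:
  assumes ku: "k_uniform n q k psi" and kn: "k \<le> n" and q: "0 < q"
    and S: "S \<subseteq> {0..<n}" "card S \<le> k"
  shows "pur n q (st psi) S = 1 / real q ^ card S"
proof -
  have fS: "finite S" using S finite_subset by auto
  have "pur n q (st psi) S = (\<Sum>a\<in>configs S q. \<Sum>b\<in>configs S q. if a = b then 1 / (real q ^ card S)^2 else 0)"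
    unfolding pur_def hs_def ptr_st
  proof (intro sum.cong refl)
    fix a b assume "a \<in> configs S q" "b \<in> configs S q"
    then show "(cmod (reduced_state n q psi S a b))^2 = (if a = b then 1 / (real q ^ card S)^2 else 0)"
      using red_small[OF ku kn q S] by (simp add: norm_divide power_divide norm_power)
  qed
  also have "\<dots> = (\<Sum>a\<in>configs S q. 1 / (real q ^ card S)^2)"
    by (rule sum.cong[OF refl]) (simp add: finite_configs[OF fS] sum.delta')
  also have "\<dots> = real (q ^ card S) / (real q ^ card S)^2"
    using fS by (simp add: card_configs)
  also have "\<dots> = 1 / real q ^ card S" using q by (simp add: power2_eq_square)
  finally show ?thesis .
qed

lemma gram_sym:
  "(\<Sum>a\<in>X. \<Sum>b\<in>X. (cmod (\<Sum>c\<in>Y. A a c * cnj (A b c)))^2)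
   = (\<Sum>c\<in>Y. \<Sum>d\<in>Y. (cmod (\<Sum>a\<in>X. A a c * cnj (A a d)))^2)"
proof -
  have L: "(cmod (\<Sum>c\<in>Y. A a c * cnj (A b c)))^2
      = Re (\<Sum>c\<in>Y. \<Sum>d\<in>Y. A a c * cnj (A b c) * cnj (A a d) * A b d)" for a b
    unfolding cmod_sq_Re by (simp add: sum_product cnj_sum mult.assoc)
  have R: "(cmod (\<Sum>a\<in>X. A a c * cnj (A a d)))^2
      = Re (\<Sum>a\<in>X. \<Sum>b\<in>X. A a c * cnj (A b c) * cnj (A a d) * A b d)" for c d
    unfolding cmod_sq_Re by (simp add: sum_product cnj_sum mult_ac)
  show ?thesis
    unfolding L R Re_sum by (rule sum_swap4)
qed

lemma merge_compl:
  assumes "a \<in> configs S q" "c \<in> configs ({0..<n} - S) q"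
  shows "merge_cfg ({0..<n} - S) c a = merge_cfg S a c"
  using assms by (auto simp: merge_cfg_def configs_def PiE_def extensional_def fun_eq_iff)

lemma pur_sym:
  assumes S: "S \<subseteq> {0..<n}"
  shows "pur n q (st psi) ({0..<n} - S) = pur n q (st psi) S"
proof -
  have cc: "{0..<n} - ({0..<n} - S) = S" using S by auto
  have "pur n q (st psi) ({0..<n} - S)
      = (\<Sum>c\<in>configs ({0..<n} - S) q. \<Sum>d\<in>configs ({0..<n} - S) q.
          (cmod (\<Sum>a\<in>configs S q. psi (merge_cfg S a c) * cnj (psi (merge_cfg S a d))))^2)"
    unfolding pur_def hs_def ptr_st reduced_state_def cc
    by (intro sum.cong refl) (simp add: merge_compl)
  also have "\<dots> = (\<Sum>a\<in>configs S q. \<Sum>b\<in>configs S q.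
          (cmod (\<Sum>c\<in>configs ({0..<n} - S) q. psi (merge_cfg S a c) * cnj (psi (merge_cfg S b c))))^2)"
    by (rule gram_sym[symmetric])
  also have "\<dots> = pur n q (st psi) S"
    unfolding pur_def hs_def ptr_st reduced_state_def ..
  finally show ?thesis .
qed

lemma pur_lower:
  assumes ku: "k_uniform n q k psi" and kn: "k \<le> n" and q: "0 < q" and S: "S \<subseteq> {0..<n}"
  shows "1 / real q ^ card S \<le> pur n q (st psi) S"
proof -
  have fS: "finite S" using S finite_subset by auto
  let ?z = "\<lambda>a. reduced_state n q psi S a a"
  have tr: "sum ?z (configs S q) = 1" using trace_eq[OF S] norm1[OF ku kn q] by simp
  have "0 \<le> (\<Sum>a\<in>configs S q. \<Sum>b\<in>configs S q. (cmod (?z a - ?z b))^2)"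
    by (intro sum_nonneg) auto
  then have cs: "1 \<le> real (q ^ card S) * (\<Sum>a\<in>configs S q. (cmod (?z a))^2)"
    unfolding complex_var_identity tr using fS by (simp add: card_configs)
  have "(\<Sum>a\<in>configs S q. (cmod (?z a))^2) \<le> pur n q (st psi) S"
    unfolding pur_def hs_def ptr_st
  proof (rule sum_mono)
    fix a assume "a \<in> configs S q"
    then show "(cmod (?z a))^2 \<le> (\<Sum>b\<in>configs S q. (cmod (reduced_state n q psi S a b))^2)"
      using member_le_sum[of a "configs S q" "\<lambda>b. (cmod (reduced_state n q psi S a b))^2"] fS
      by (simp add: finite_configs)
  qed
  with cs have "1 \<le> real q ^ card S * pur n q (st psi) S"
    by (smt (verit) mult_left_mono of_nat_0_le_iff of_nat_power)
  then show ?thesis using q by (simp add: field_simps)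
qed



theorem lemma1:
  fixes q n k :: nat and p :: "nat \<Rightarrow> real"
  assumes "q \<ge> 2"
    and "k + 1 \<le> n div 2"
    and "\<forall>i \<in> {k+1..n-(k+1)}. p i \<ge> 0"
    and "\<forall>j \<in> {k+1..n}. (\<Sum>i=j..n. p i * real ((n - j) choose (i - j))) \<le> 0"
    and "(\<Sum>i=n div 2 + 1..n. p i * (real q ^ (2*i - n) - 1) * real (n choose i)) > 0"
  shows "\<not> (\<exists>psi. k_uniform n q k psi)"
proof
  assume "\<exists>psi. k_uniform n q k psi"
  then obtain psi where ku: "k_uniform n q k psi" by blast
  have q: "0 < q" using assms(1) by simp
  have kn: "k \<le> n" using assms(2) by linarith
  define P where "P = Pow {0..<n}"
  define pi where "pi U = real q ^ card U * pur n q (st psi) U" for U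
  define Qt where "Qt T = QQ n q T (st psi)" for T
  define G where "G T = (\<Sum>U\<in>{U\<in>P. T \<subseteq> U}. p (card U))" for T
  define h where "h i = (if n div 2 < i then p i * (real q ^ (2*i - n) - 1) else 0)" for i
  have finP: "finite P" by (simp add: P_def)
  have qpos: "0 < real q" using q by simp
  have mob: "pi U = (\<Sum>T\<in>Pow U. Qt T)" if U: "U \<subseteq> {0..<n}" for U
  proof -
    have fU: "finite U" using U finite_subset by auto
    have "(\<Sum>T\<in>Pow U. Qt T) = (\<Sum>T\<in>Pow U. \<Sum>S\<in>Pow T. (-1)^card (T - S) * pi S)"
      by (simp add: Qt_def QQ_def pi_def mult.assoc)
    also have "\<dots> = pi U" by (rule mobius_sum[OF fU])
    finally show ?thesis by simp
  qed
  have Qnn: "0 \<le> Qt T" if "T \<subseteq> {0..<n}" for T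
    unfolding Qt_def using that finite_subset by (intro QQ_nonneg[OF _ that q]) auto
  have pi_small: "pi U = 1" if "U \<subseteq> {0..<n}" "card U \<le> k" for U
    unfolding pi_def using pur_small[OF ku kn q that] qpos by simp
  have Qsmall: "Qt T = 0" if T: "T \<subseteq> {0..<n}" "card T \<le> k" "T \<noteq> {}" for T
  proof -
    have fT: "finite T" using T finite_subset by auto
    have "Qt T = (\<Sum>S\<in>Pow T. (-1)^card (T - S) * pi S)"
      by (simp add: Qt_def QQ_def pi_def mult.assoc)
    also have "\<dots> = (\<Sum>S\<in>Pow T. (-1::real)^card (T - S))"
    proof (rule sum.cong[OF refl])
      fix S assume "S \<in> Pow T"
      then have "S \<subseteq> {0..<n}" "card S \<le> k" using T fT card_mono[OF fT] by (auto intro: order_trans)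
      then show "(-1)^card (T - S) * pi S = (-1::real)^card (T - S)" using pi_small by simp
    qed
    also have "\<dots> = (\<Sum>W\<in>Pow T. (-1::real)^card W)"
      by (rule sum.reindex_bij_witness[where i="\<lambda>S. T - S" and j="\<lambda>S. T - S"]) auto
    also have "\<dots> = 0" using alt_Pow[OF fT] T(3) by simp
    finally show ?thesis .
  qed
  have Q0: "Qt {} = 1"
    using pi_small[of "{}"] by (simp add: Qt_def QQ_def pi_def)
  have pi_lower1: "1 \<le> pi U" if "U \<subseteq> {0..<n}" for U
    using pur_lower[OF ku kn q that] qpos unfolding pi_def by (simp add: field_simps)
  have cardc: "card ({0..<n} - U) = n - card U" if "U \<subseteq> {0..<n}" for U
    using that by (simp add: card_Diff_subset finite_subset)
  have pi_lower2: "real q ^ card U / real q ^ (n - card U) \<le> pi U" if U: "U \<subseteq> {0..<n}" for U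
  proof -
    have "1 / real q ^ (n - card U) \<le> pur n q (st psi) U"
      using pur_lower[OF ku kn q, of "{0..<n} - U"] pur_sym[OF U] cardc[OF U] by auto
    then show ?thesis unfolding pi_def using qpos
      by (simp add: divide_le_eq mult.commute field_simps)
  qed
  have pi_big: "pi U = real q ^ card U / real q ^ (n - card U)" if U: "U \<subseteq> {0..<n}" "n - k \<le> card U" for U
  proof -
    have "card ({0..<n} - U) \<le> k" using cardc[OF U(1)] U(2) by simp
    then have "pur n q (st psi) U = 1 / real q ^ (n - card U)"
      using pur_small[OF ku kn q, of "{0..<n} - U"] pur_sym[OF U(1)] cardc[OF U(1)] by auto
    then show ?thesis unfolding pi_def by simp
  qed
  have pw: "real q ^ i / real q ^ (n - i) = real q ^ (2*i - n)" if "n div 2 < i" "i \<le> n" for i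
  proof -
    have "2*i - n = i - (n - i)" using that by linarith
    moreover have "n - i \<le> i" using that by linarith
    moreover have "real q ^ (i - (n - i)) = real q ^ i / real q ^ (n - i)"
      using qpos \<open>n - i \<le> i\<close> by (intro power_diff) auto
    ultimately show ?thesis by simp
  qed
  have A: "(\<Sum>U\<in>P. p (card U) * pi U) = (\<Sum>T\<in>P. Qt T * G T)"
  proof -
    have "(\<Sum>U\<in>P. p (card U) * pi U) = (\<Sum>U\<in>P. \<Sum>T\<in>{T. T \<in> P \<and> T \<subseteq> U}. p (card U) * Qt T)"
    proof (rule sum.cong[OF refl])
      fix U assume U: "U \<in> P"
      then have "{T. T \<in> P \<and> T \<subseteq> U} = Pow U" by (auto simp: P_def)
      then show "p (card U) * pi U = (\<Sum>T\<in>{T. T \<in> P \<and> T \<subseteq> U}. p (card U) * Qt T)"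
        using mob U by (simp add: P_def sum_distrib_left)
    qed
    also have "\<dots> = (\<Sum>T\<in>P. \<Sum>U\<in>{U. U \<in> P \<and> T \<subseteq> U}. p (card U) * Qt T)"
      using finP by (rule sum.swap_restrict[OF _ finP])
    also have "\<dots> = (\<Sum>T\<in>P. Qt T * G T)"
      by (simp add: G_def sum_distrib_left sum_distrib_right mult.commute)
    finally show ?thesis .
  qed
  have B: "Qt T * G T \<le> 0" if T: "T \<in> P" "T \<noteq> {}" for T
  proof (cases "card T \<le> k")
    case True
    then show ?thesis using Qsmall T by (simp add: P_def)
  next
    case False
    have Tn: "T \<subseteq> {0..<n}" using T by (simp add: P_def)
    have "card T \<le> n" using card_mono[OF _ Tn] by simp
    then have j: "card T \<in> {k+1..n}" using False by simp
    have "G T = (\<Sum>i=card T..n. p i * real ((n - card T) choose (i - card T)))"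
      unfolding G_def P_def using sum_supersets_card[OF _ Tn, of p] by simp
    then have "G T \<le> 0" using assms(4) j by simp
    then show ?thesis using Qnn[OF Tn] by (simp add: mult_nonneg_nonpos)
  qed
  have C: "(\<Sum>T\<in>P. Qt T * G T) \<le> G {}"
  proof -
    have "{} \<in> P" by (simp add: P_def)
    then have "(\<Sum>T\<in>P. Qt T * G T) = Qt {} * G {} + (\<Sum>T\<in>P - {{}}. Qt T * G T)"
      using finP by (simp add: sum.remove)
    moreover have "(\<Sum>T\<in>P - {{}}. Qt T * G T) \<le> 0"
      using B by (intro sum_nonpos) auto
    ultimately show ?thesis using Q0 by simp
  qed
  have D: "G {} = (\<Sum>U\<in>P. p (card U))" by (simp add: G_def)
  have le0: "(\<Sum>U\<in>P. p (card U) * (pi U - 1)) \<le> 0"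
    using A C D by (simp add: right_diff_distrib sum_subtractf)
  have E: "h (card U) \<le> p (card U) * (pi U - 1)" if U: "U \<in> P" for U
  proof -
    have Un: "U \<subseteq> {0..<n}" using U by (simp add: P_def)
    define i where "i = card U"
    have iN: "i \<le> n" using card_mono[OF _ Un] by (simp add: i_def)
    show ?thesis
    proof (cases "i \<le> k")
      case True
      then have "\<not> n div 2 < i" using assms(2) by linarith
      then show ?thesis using pi_small[OF Un] True by (simp add: h_def i_def)
    next
      case nk: False
      show ?thesis
      proof (cases "n - k \<le> i")
        case True
        have gt: "n div 2 < i" using True assms(2) by linarith
        have "pi U = real q ^ (2*i - n)" using pi_big[OF Un] True pw[OF gt iN] by (simp add: i_def)
        then show ?thesis using gt by (simp add: h_def i_def)
      next
        case False
        have pnn: "0 \<le> p i" using assms(3) nk False by simp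
        show ?thesis
        proof (cases "n div 2 < i")
          case True
          have "real q ^ (2*i - n) \<le> pi U" using pi_lower2[OF Un] pw[OF True iN] by (simp add: i_def)
          then have "p i * (real q ^ (2*i - n) - 1) \<le> p i * (pi U - 1)"
            using pnn by (intro mult_left_mono) auto
          then show ?thesis using True by (simp add: h_def i_def)
        next
          case False
          then show ?thesis using pnn pi_lower1[OF Un] by (simp add: h_def i_def)
        qed
      qed
    qed
  qed
  have F: "(\<Sum>U\<in>P. h (card U)) = (\<Sum>i=n div 2 + 1..n. p i * (real q ^ (2*i - n) - 1) * real (n choose i))"
  proof -
    have "(\<Sum>U\<in>P. h (card U)) = (\<Sum>i=0..n. real (n choose i) * h i)"
      unfolding P_def using sum_Pow_card[of "{0..<n}" h] by simp
    also have "\<dots> = (\<Sum>i=n div 2 + 1..n. p i * (real q ^ (2*i - n) - 1) * real (n choose i))"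
      by (rule sum.mono_neutral_cong_right) (auto simp: h_def)
    finally show ?thesis .
  qed
  have "(\<Sum>U\<in>P. h (card U)) \<le> (\<Sum>U\<in>P. p (card U) * (pi U - 1))"
    using E by (rule sum_mono)
  then show False using le0 F assms(5) by linarith
qed

end
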